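(* Let $n\ge1$, $\delta>0$, $N$ a multiple of $n$, $L=N/n$, $q_n=\frac{n\delta+\sqrt{n^2\delta^2+4n\delta}}2$, $\zeta=(\delta n+4)/(\delta n)$, $\rho=\frac{\sqrt\zeta-1}{\sqrt\zeta+1}$. Let $H\in\mathbb R^{N\times N}$ be the block tridiagonal matrix with $L\times L$ blocks of size $n\times n$, diagonal blocks $(\delta n+2)I_n$ except the last, which is $(q_n+1)I_n$, and blocks $-I_n$ on the first super- and sub-block-diagonals. Then $H$ is invertible and $Y=H^{-1}$ has the block form $Y=(y_{ij}I_n)_{i,j=1}^{L}$ with scalars $y_{ij}$ satisfying $$y_{t,t+\tau}\ge\frac{1-\rho}{\delta n+2}\rho^{\tau}>0\quad\text{for all }1\le t\le t+\tau\le L,\ \tau\ge0.$$ *)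

theory Defs
  imports Complex_Main "Jordan_Normal_Form.Matrix"
begin

definition q_n :: "nat \<Rightarrow> real \<Rightarrow> real" where
  "q_n n \<delta> = (real n * \<delta> + sqrt ((real n)^2 * \<delta>^2 + 4 * real n * \<delta>)) / 2"

definition zeta :: "nat \<Rightarrow> real \<Rightarrow> real" where
  "zeta n \<delta> = (\<delta> * real n + 4) / (\<delta> * real n)"

definition rho :: "nat \<Rightarrow> real \<Rightarrow> real" where
  "rho n \<delta> = (sqrt (zeta n \<delta>) - 1) / (sqrt (zeta n \<delta>) + 1)"

text \<open>Block tridiagonal matrix of size N = n*L, with L x L blocks of size n x n
  (0-indexed: entry (a,b) lies in block (a div n, b div n) at position (a mod n, b mod n)).\<close>
definition H_mat :: "nat \<Rightarrow> nat \<Rightarrow> real \<Rightarrow> real mat" where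
  "H_mat n L \<delta> = mat (n * L) (n * L) (\<lambda>(a, b).
     (let i = a div n; j = b div n in
      if a mod n \<noteq> b mod n then 0
      else if i = j then (if i = L - 1 then q_n n \<delta> + 1 else \<delta> * real n + 2)
      else if i = j + 1 \<or> j = i + 1 then -1
      else 0))"

end

theory Submission
  imports Defs "Jordan_Normal_Form.Determinant"
begin


lemma rec_alg:
 fixes p :: real assumes p: "0<p" "p<1" and ij: "i<L" "j<L"
 and y: "\<And>i j. y i j = p^(max i j - min i j + 1) * (1 - p^(2*min i j + 2)) / (1 - p^2)"
 shows "(if 0<i then - y (i-1) j else 0) + (if i = L-1 then 1/p else p + 1/p) * y i j + (if i+1<L then - y (i+1) j else 0) = (if i = j then 1 else 0)"
proof -
  define c where "c = 1 - p^2"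
  have "p^2 < 1" using p by (simp add: power_less_one_iff)
  then have c0: "c \<noteq> 0" unfolding c_def by simp
  have p0: "p \<noteq> 0" using p by simp
  have y': "\<And>i j. y i j = p^(max i j - min i j + 1) * (1 - p^(2*min i j + 2)) / c" unfolding c_def by (rule y)
  consider "i<j" | "i=j" | "j<i" by linarith
  then show ?thesis
  proof cases
    case 1
    define k where "k = j - i - 1"
    have jk: "j = i+1+k" using 1 unfolding k_def by simp
    have nl: "i \<noteq> L-1" "i+1<L" "i \<noteq> j" using 1 ij by auto
    define P where "P = p^k"
    define Q where "Q = p^(2*i)"
    have e1: "y i j = P*p^2 * (1 - Q*p^2) / c"
    proof -
      have "max i j - min i j + 1 = k+2" "2*min i j + 2 = 2*i+2" using jk by auto
      then show ?thesis unfolding y' P_def Q_def by (simp only: power_add)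
    qed
    have e2: "y (i+1) j = P*p * (1 - Q*p^4) / c"
    proof -
      have "max (i+1) j - min (i+1) j + 1 = k+1" "2*min (i+1) j + 2 = 2*i+4" using jk by auto
      then show ?thesis unfolding y' P_def Q_def by (simp only: power_add power_one_right)
    qed
    have e3: "(if 0<i then - y (i-1) j else 0) = - (P*p^3 * (1 - Q)) / c"
    proof (cases "i=0")
      case True then show ?thesis unfolding Q_def by simp
    next
      case False
      have "max (i-1) j - min (i-1) j + 1 = k+3" "2*min (i-1) j + 2 = 2*i" using jk False by auto
      then show ?thesis unfolding y' P_def Q_def using False by (simp only: power_add) simp
    qed
    show ?thesis unfolding e1 e2 e3 using nl c0 p0 by (simp add: field_simps) (simp add: algebra_simps power2_eq_square power3_eq_cube power4_eq_xxxx)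
  next
    case 2
    have nl: "i+1<L \<or> i = L-1" using ij by auto
    define Q where "Q = p^(2*i)"
    have e1: "y i j = p * (1 - Q*p^2) / c"
    proof -
      have "max i j - min i j + 1 = 1" "2*min i j + 2 = 2*i+2" using 2 by auto
      then show ?thesis unfolding y' Q_def by (simp only: power_add power_one_right)
    qed
    have e2: "y (i+1) j = p^2 * (1 - Q*p^2) / c"
    proof -
      have "max (i+1) j - min (i+1) j + 1 = 2" "2*min (i+1) j + 2 = 2*i+2" using 2 by auto
      then show ?thesis unfolding y' Q_def by (simp only: power_add)
    qed
    have e3: "(if 0<i then - y (i-1) j else 0) = - (p^2 * (1 - Q)) / c"
    proof (cases "i=0")
      case True then show ?thesis unfolding Q_def by simp
    next
      case False
      have "max (i-1) j - min (i-1) j + 1 = 2" "2*min (i-1) j + 2 = 2*i" using 2 False by auto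
      then show ?thesis unfolding y' Q_def using False by (simp only: power_add) simp
    qed
    from nl show ?thesis
    proof
      assume a: "i+1<L"
      then have b: "i \<noteq> L-1" by auto
      have m: "(p + 1/p) * (p * (1 - Q*p^2)) = (p^2+1) * (1 - Q*p^2)"
        using p0 c0 by (simp add: field_simps power2_eq_square)
      have "- (p^2 * (1 - Q)) / c + (p^2+1) * (1 - Q*p^2) / c + - (p^2 * (1 - Q*p^2) / c)
         = (- (p^2 * (1 - Q)) + (p^2+1) * (1 - Q*p^2) - (p^2 * (1 - Q*p^2))) / c"
        by (simp add: diff_divide_distrib add_divide_distrib)
      also have "\<dots> = c / c" unfolding c_def by (simp add: algebra_simps power2_eq_square power4_eq_xxxx)
      also have "\<dots> = 1" using c0 by simp
      finally show ?thesis unfolding e1 e2 e3 using a b 2 by (simp add: m)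
    next
      assume a: "i = L-1"
      then have "\<not> i+1<L" using ij by auto
      then show ?thesis unfolding e1 e2 e3 using a 2 c0 p0 unfolding c_def by (simp add: field_simps)
    qed
  next
    case 3
    define k where "k = i - j - 1"
    have ik: "i = j+1+k" using 3 unfolding k_def by simp
    have nl: "i+1<L \<or> i = L-1" "i \<noteq> j" "0 < i" using ij 3 by auto
    define P where "P = p^k"
    define R where "R = 1 - p^(2*j+2)"
    have e1: "y i j = P*p^2 * R / c"
    proof -
      have "max i j - min i j + 1 = k+2" "min i j = j" using ik by auto
      then show ?thesis unfolding y' P_def R_def by (simp only: power_add)
    qed
    have e2: "y (i+1) j = P*p^3 * R / c"
    proof -
      have "max (i+1) j - min (i+1) j + 1 = k+3" "min (i+1) j = j" using ik by auto
      then show ?thesis unfolding y' P_def R_def by (simp only: power_add)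
    qed
    have e3: "y (i-1) j = P*p * R / c"
    proof -
      have "max (i-1) j - min (i-1) j + 1 = k+1" "min (i-1) j = j" using ik by auto
      then show ?thesis unfolding y' P_def R_def by (simp only: power_add power_one_right)
    qed
    from nl(1) show ?thesis
    proof
      assume a: "i+1<L"
      then have "i \<noteq> L-1" by auto
      then show ?thesis unfolding e1 e2 e3 using a nl c0 p0 by (simp add: field_simps) (simp add: algebra_simps power2_eq_square power3_eq_cube)
    next
      assume a: "i = L-1"
      then have "\<not> i+1<L" using ij by auto
      then show ?thesis unfolding e1 e2 e3 using a nl c0 p0 by (simp add: field_simps) (simp add: algebra_simps power2_eq_square power3_eq_cube)
    qed
  qed
qed

lemma rho_facts:
  assumes n: "n \<ge> 1" and d: "\<delta> > 0"
  shows "0 < rho n \<delta>" "rho n \<delta> < 1" "\<delta>*real n + 2 = rho n \<delta> + 1/rho n \<delta>"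
        "q_n n \<delta> + 1 = 1/rho n \<delta>"
proof -
  define s where "s = \<delta> * real n"
  have s: "s > 0" unfolding s_def using n d by simp
  define r where "r = sqrt (zeta n \<delta>)"
  have z: "zeta n \<delta> = (s+4)/s" unfolding zeta_def s_def by simp
  have r2: "r^2 = (s+4)/s" unfolding r_def z using s by simp
  have r1: "r > 1" unfolding r_def z using s by simp
  have sr: "s * r^2 = s + 4" using r2 s by (simp add: field_simps)
  have p: "rho n \<delta> = (r-1)/(r+1)" unfolding rho_def r_def by simp
  show "0 < rho n \<delta>" "rho n \<delta> < 1" unfolding p using r1 by simp_all
  have a: "(r-1)/(r+1) + 1/((r-1)/(r+1)) = 2*(r^2+1)/(r^2-1)" using r1
    by (simp add: field_simps power2_eq_square)
  have b: "r^2 - 1 = 4/s" "r^2 + 1 = (2*s+4)/s" using r2 s by (simp_all add: field_simps)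
  show "\<delta>*real n + 2 = rho n \<delta> + 1/rho n \<delta>" unfolding p a b s_def[symmetric] using s by (simp add: field_simps)
  have sq: "sqrt ((real n)^2 * \<delta>^2 + 4 * real n * \<delta>) = s * r"
  proof -
    have "(s*r)^2 = s*(s*r^2)" by (simp add: power2_eq_square)
    also have "\<dots> = s*(s+4)" using sr by simp
    also have "\<dots> = (real n)^2 * \<delta>^2 + 4 * real n * \<delta>" unfolding s_def by (simp add: algebra_simps power2_eq_square)
    finally have "(real n)^2 * \<delta>^2 + 4 * real n * \<delta> = (s*r)^2" by simp
    then show ?thesis using s r1 by simp
  qed
  have "q_n n \<delta> = (s + s*r)/2" unfolding q_n_def sq s_def by (simp add: mult.commute)
  moreover have "(s + s*r)/2 + 1 = (r+1)/(r-1)"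
  proof -
    have "(s + s*r)/2 + 1 = (s + s*r + 2)/2" by simp
    have "(s + s*r + 2) * (r - 1) = 2 * (r+1)" using sr by (simp add: algebra_simps power2_eq_square)
    then show ?thesis using r1 by (simp add: field_simps)
  qed
  ultimately show "q_n n \<delta> + 1 = 1/rho n \<delta>" unfolding p by (metis divide_divide_eq_right divide_self_if mult_1)
qed


lemma sum_add_split: fixes a b :: nat shows "(\<Sum>c<a+b. f c) = (\<Sum>c<a. f c) + (\<Sum>m<b. f (a+m))"
  by (induction b) (simp_all add: add.assoc)

lemma sum_blocks: fixes n L :: nat shows "(\<Sum>c<n*L. f c) = (\<Sum>k<L. \<Sum>m<n. f (k*n+m))"
proof (induction L)
  case 0 then show ?case by simp
next
  case (Suc L)
  have "(\<Sum>c<n*Suc L. f c) = (\<Sum>c<n*L + n. f c)" by (simp add: add.commute)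
  also have "\<dots> = (\<Sum>c<n*L. f c) + (\<Sum>m<n. f (n*L+m))" by (rule sum_add_split)
  finally show ?case using Suc by (simp add: mult.commute)
qed

lemma T_sum:
  fixes y :: "nat \<Rightarrow> nat \<Rightarrow> real" and D :: real
  assumes "i < L"
  defines "T \<equiv> \<lambda>i k. if i = k then D else if i = k+1 \<or> k = i+1 then -1 else (0::real)"
  shows "(\<Sum>k<L. T i k * y k j) = (if 0<i then - y (i-1) j else 0) + D * y i j + (if i+1<L then - y (i+1) j else 0)"
proof -
  have pw: "T i k * y k j = (if k = i then D * y i j else 0) + (if k = i-1 then (if 0<i then - y k j else 0) else 0)
     + (if k = i+1 then - y k j else 0)" for k
    unfolding T_def by auto
  have "(\<Sum>k<L. T i k * y k j) = (\<Sum>k<L. (if k = i then D * y i j else 0)) + (\<Sum>k<L. (if k = i-1 then (if 0<i then - y k j else 0) else 0))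
     + (\<Sum>k<L. (if k = i+1 then - y k j else 0))" unfolding pw sum.distrib by simp
  also have "\<dots> = (if 0<i then - y (i-1) j else 0) + D * y i j + (if i+1<L then - y (i+1) j else 0)"
    using assms(1) by (simp add: sum.delta)
  finally show ?thesis .
qed


theorem lemma11:
  fixes n L :: nat and \<delta> :: real
  assumes "n \<ge> 1" and "\<delta> > 0"
  defines "N \<equiv> n * L"
  shows "invertible_mat (H_mat n L \<delta>) \<and>
    (\<exists>Y y. Y \<in> carrier_mat N N \<and> H_mat n L \<delta> * Y = 1\<^sub>m N \<and> Y * H_mat n L \<delta> = 1\<^sub>m N \<and>
       (\<forall>a<N. \<forall>b<N. Y $$ (a, b) = (if a mod n = b mod n then y (a div n) (b div n) else 0)) \<and>
       (\<forall>t \<tau>. t + \<tau> < L \<longrightarrow>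
          y t (t + \<tau>) \<ge> (1 - rho n \<delta>) / (\<delta> * real n + 2) * rho n \<delta> ^ \<tau> \<and>
          (1 - rho n \<delta>) / (\<delta> * real n + 2) * rho n \<delta> ^ \<tau> > 0))"
proof -
  define p where "p = rho n \<delta>"
  have p0: "0 < p" and p1: "p < 1" and pd: "\<delta>*real n + 2 = p + 1/p" and pq: "q_n n \<delta> + 1 = 1/p"
    using rho_facts[OF assms(1,2)] unfolding p_def by auto
  have n0: "n > 0" using assms(1) by simp
  define y where "y = (\<lambda>i j. p^(max i j - min i j + 1) * (1 - p^(2*min i j + 2)) / (1 - p^2))"
  define Y where "Y = mat N N (\<lambda>(a,b). if a mod n = b mod n then y (a div n) (b div n) else 0)"
  define H where "H = H_mat n L \<delta>"
  define T where "T = (\<lambda>i k. if i = k then (if i = L - 1 then q_n n \<delta> + 1 else \<delta> * real n + 2)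
      else if i = k+1 \<or> k = i+1 then -1 else (0::real))"
  have HN: "H \<in> carrier_mat N N" and YN: "Y \<in> carrier_mat N N"
    unfolding H_def H_mat_def Y_def N_def by auto
  have Hent: "H $$ (a,c) = (if a mod n = c mod n then T (a div n) (c div n) else 0)" if "a < N" "c < N" for a c
    using that unfolding H_def H_mat_def T_def N_def by (auto simp: Let_def)
  have Yent: "Y $$ (c,b) = (if c mod n = b mod n then y (c div n) (b div n) else 0)" if "c < N" "b < N" for c b
    using that unfolding Y_def by simp
  have Tsum: "(\<Sum>k<L. T i k * y k j) = (if i = j then 1 else 0)" if "i<L" "j<L" for i j
  proof -
    have "(\<Sum>k<L. T i k * y k j) = (if 0<i then - y (i-1) j else 0) + (if i = L - 1 then q_n n \<delta> + 1 else \<delta> * real n + 2) * y i j + (if i+1<L then - y (i+1) j else 0)"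
      unfolding T_def by (rule T_sum[OF that(1)])
    also have "\<dots> = (if i = j then 1 else 0)"
      unfolding pq pd by (rule rec_alg[OF p0 p1 that]) (simp add: y_def)
    finally show ?thesis .
  qed
  have HY: "H * Y = 1\<^sub>m N"
  proof (rule eq_matI)
    fix a b assume a: "a < dim_row (1\<^sub>m N)" and b: "b < dim_col (1\<^sub>m N)"
    then have a: "a < N" and b: "b < N" by auto
    define i where "i = a div n"
    define j where "j = b div n"
    have iL: "i < L" and jL: "j < L" using a b n0 unfolding i_def j_def N_def
      by (simp_all add: less_mult_imp_div_less mult.commute)
    have amn: "a mod n < n" using n0 by simp
    have "(H * Y) $$ (a,b) = (\<Sum>c<N. H $$ (a,c) * Y $$ (c,b))"
      using a b HN YN by (simp add: scalar_prod_def lessThan_atLeast0)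
    also have "\<dots> = (\<Sum>k<L. \<Sum>m<n. H $$ (a,k*n+m) * Y $$ (k*n+m,b))"
      unfolding N_def by (rule sum_blocks)
    also have "\<dots> = (\<Sum>k<L. \<Sum>m<n. if m = a mod n then (if a mod n = b mod n then T i k * y k j else 0) else 0)"
    proof (intro sum.cong refl)
      fix k m assume k: "k \<in> {..<L}" and m: "m \<in> {..<n}"
      have c: "k*n+m < N"
      proof -
        have "k*n+m < (k+1)*n" using m by simp
        also have "(k+1)*n \<le> L*n" using k by (intro mult_right_mono) auto
        finally show ?thesis unfolding N_def by (simp add: mult.commute)
      qed
      have d: "(k*n+m) div n = k" "(k*n+m) mod n = m" using m n0 by auto
      show "H $$ (a,k*n+m) * Y $$ (k*n+m,b) = (if m = a mod n then (if a mod n = b mod n then T i k * y k j else 0) else 0)"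
        unfolding Hent[OF a c] Yent[OF c b] d i_def j_def by auto
    qed
    also have "\<dots> = (\<Sum>k<L. (if a mod n = b mod n then T i k * y k j else 0))"
      using amn by (simp add: sum.delta)
    also have "\<dots> = (if a mod n = b mod n then (\<Sum>k<L. T i k * y k j) else 0)" by simp
    also have "\<dots> = (if a mod n = b mod n \<and> i = j then 1 else 0)" using Tsum[OF iL jL] Tsum[OF jL jL] by auto
    also have "\<dots> = 1\<^sub>m N $$ (a,b)"
    proof -
      have e: "a = a div n * n + a mod n" "b = b div n * n + b mod n" by simp_all
      have "(a mod n = b mod n \<and> i = j) = (a = b)" unfolding i_def j_def
        using e by metis
      then show ?thesis using a b by simp
    qed
    finally show "(H * Y) $$ (a,b) = 1\<^sub>m N $$ (a,b)" .
  next
    show "dim_row (H*Y) = dim_row (1\<^sub>m N)" using HN by simp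
    show "dim_col (H*Y) = dim_col (1\<^sub>m N)" using YN by simp
  qed
  have YH: "Y * H = 1\<^sub>m N" by (rule mat_mult_left_right_inverse[OF HN YN HY])
  have inv: "invertible_mat H"
    unfolding invertible_mat_def inverts_mat_def using HN YN HY YH by auto
  have bound: "y t (t + \<tau>) \<ge> (1 - p) / (\<delta> * real n + 2) * p ^ \<tau> \<and> (1 - p) / (\<delta> * real n + 2) * p ^ \<tau> > 0" for t \<tau>
  proof
    have c: "0 < 1 - p^2" using p0 p1 by (simp add: power_less_one_iff)
    have ye: "y t (t+\<tau>) = p^(\<tau>+1) * ((1 - p^(2*t+2)) / (1 - p^2))" unfolding y_def by simp
    have "p^(2*t+2) = p^2 * p^(2*t)" by (simp add: power_add power2_eq_square)
    also have "\<dots> \<le> p^2" using p0 p1 by (simp add: power_le_one mult_left_le)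
    finally have "1 \<le> (1 - p^(2*t+2)) / (1 - p^2)" using c by simp
    then have "p^(\<tau>+1) * 1 \<le> p^(\<tau>+1) * ((1 - p^(2*t+2)) / (1 - p^2))" using p0 by (intro mult_left_mono) auto
    then have g1: "p^(\<tau>+1) \<le> y t (t+\<tau>)" by (simp only: mult_1_right ye[symmetric])
    have "(1 - p) / (\<delta> * real n + 2) = p * (1-p) / (p^2+1)" unfolding pd using p0
      by (simp add: field_simps power2_eq_square)
    also have "\<dots> \<le> p"
    proof -
      have den: "0 < p^2+1" using zero_le_power2[of p] by linarith
      have "1-p \<le> p^2+1" using p0 zero_le_power2[of p] by linarith
      then have "p*(1-p) \<le> p*(p^2+1)" using p0 by (intro mult_left_mono) auto
      then show ?thesis using den by (simp add: pos_divide_le_eq mult.commute)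
    qed
    finally have "(1 - p) / (\<delta> * real n + 2) * p^\<tau> \<le> p * p^\<tau>" using p0 by (intro mult_right_mono) auto
    then show "(1 - p) / (\<delta> * real n + 2) * p ^ \<tau> \<le> y t (t + \<tau>)" using g1 by simp
    have "0 < \<delta> * real n + 2" using mult_nonneg_nonneg[of \<delta> "real n"] assms(2) by linarith
    then show "(1 - p) / (\<delta> * real n + 2) * p ^ \<tau> > 0" using p0 p1
      by (intro mult_pos_pos divide_pos_pos) auto
  qed
  show ?thesis
    unfolding H_def[symmetric] p_def[symmetric]
    using inv HY YH YN Yent bound by blast
qed

end
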